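(* Let $R$ be a commutative domain with unit, let $f\in R$ be nonzero and non-invertible, and let $S=R[u,v]/(uv-f)$ (a domain). Denote by $R[u]$ and $R[v]$ the subrings of $S$ generated by $R$ and $u$, resp. by $R$ and $v$. Let $\phi\in\operatorname{Frac}(S)$ and suppose there exist $d\in\mathbb{Z}_{\ge 0}$, $g\in R[u]$ and $h\in R[v]$ such that $\phi=\frac{g}{u^d}=\frac{h}{v^d}$. Then $\phi\in S$. *)

theory Defs
  imports "HOL-Computational_Algebra.Polynomial"
begin

text \<open>The polynomial ring R[u,v] is modelled as ('a poly) poly:
  the outer variable is v, the inner variable (in the coefficients) is u.
  S = R[u,v]/(uv - f); elements of S are represented by polynomials, and
  equality in S is congruence modulo the principal ideal (uv - f).\<close>

definition var_u :: "'a::comm_ring_1 poly poly" where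
  "var_u = [:[:0, 1:]:]"

definition var_v :: "'a::comm_ring_1 poly poly" where
  "var_v = [:0, 1:]"

definition uv_rel :: "'a::comm_ring_1 \<Rightarrow> 'a poly poly" where
  "uv_rel f = var_u * var_v - [:[:f:]:]"

definition eqS :: "'a::comm_ring_1 \<Rightarrow> 'a poly poly \<Rightarrow> 'a poly poly \<Rightarrow> bool" where
  "eqS f p q \<longleftrightarrow> uv_rel f dvd (p - q)"

definition in_u :: "'a::comm_ring_1 poly \<Rightarrow> 'a poly poly" where
  "in_u g = [:g:]"

definition in_v :: "'a::comm_ring_1 poly \<Rightarrow> 'a poly poly" where
  "in_v h = map_poly (\<lambda>c. [:c:]) h"

end

theory Submission
  imports Defs
begin

lemma const_pow: "[:a:] ^ n = [:a ^ n:]"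
  by (induction n) (auto simp: mult.commute)

lemma xpow: "[:0,1:] ^ n = monom 1 n"
  by (simp add: monom_altdef)

lemma uv_rel_alt: "uv_rel f = pCons (-[:f:]) [:[:0,1:]:]"
  by (simp add: uv_rel_def var_u_def var_v_def)

lemma coeffE:
  fixes f :: "'a::idom"
  assumes "in_u g * var_v ^ d - in_v h * var_u ^ d = uv_rel f * q"
  shows "(if j = d then g else 0) - monom (coeff h j) d
         = [:0,1:] * coeff (pCons 0 q) j - smult f (coeff q j)"
proof -
  have "coeff (in_u g * var_v ^ d - in_v h * var_u ^ d) j = coeff (uv_rel f * q) j"
    using assms by simp
  moreover have "coeff (in_u g * var_v ^ d) j = (if j = d then g else 0)"
    by (simp add: in_u_def var_v_def xpow)
  moreover have "coeff (in_v h * var_u ^ d) j = monom (coeff h j) d"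
    by (simp add: in_v_def var_u_def const_pow coeff_map_poly monom_altdef)
  moreover have "coeff (uv_rel f * q) j = [:0,1:] * coeff (pCons 0 q) j - smult f (coeff q j)"
    by (cases j) (simp_all add: uv_rel_alt)
  ultimately show ?thesis by simp
qed

lemma step1:
  fixes f :: "'a::idom"
  assumes E: "\<And>j. (if j = d then g else 0) - monom (coeff h j) d
         = [:0,1:] * coeff (pCons 0 q) j - smult f (coeff q j)"
    and f: "f \<noteq> 0"
  shows "j < d \<Longrightarrow> monom 1 d dvd coeff q j"
proof (induction j)
  case 0
  have "smult f (coeff q 0) = monom (coeff h 0) d"
    using E[of 0] 0 by (simp add: algebra_simps)
  then have "\<forall>k<d. coeff (smult f (coeff q 0)) k = 0" by simp
  then show ?case using f by (simp add: monom_1_dvd_iff')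
next
  case (Suc i)
  have "smult f (coeff q (Suc i)) = [:0,1:] * coeff q i + monom (coeff h (Suc i)) d"
    using E[of "Suc i"] Suc by (simp add: algebra_simps)
  moreover have "\<forall>k<d. coeff (coeff q i) k = 0"
    using Suc by (simp add: monom_1_dvd_iff')
  ultimately have "\<forall>k<d. coeff (smult f (coeff q (Suc i))) k = 0"
    by (auto simp: coeff_pCons split: nat.splits)
  then show ?case using f by (simp add: monom_1_dvd_iff')
qed

theorem lemma1p8:
  fixes f :: "'a::idom" and g h :: "'a poly" and d :: nat
  assumes "f \<noteq> 0" and "\<not> f dvd 1"
    and "eqS f (in_u g * var_v ^ d) (in_v h * var_u ^ d)"
  shows "\<exists>s :: 'a poly poly. eqS f (in_u g) (s * var_u ^ d)"
proof -
  obtain q where q: "in_u g * var_v ^ d - in_v h * var_u ^ d = uv_rel f * q"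
    using assms(3) unfolding eqS_def by (elim dvdE)
  note E = coeffE[OF q]
  define U :: "'a poly" where "U = [:0,1:]"
  define C where "C j = [:coeff q j:]" for j
  define H :: "nat \<Rightarrow> 'a poly poly" where "H j = [:[:coeff h j:]:]" for j
  define F :: "'a poly poly" where "F = [:[:f:]:]"
  define V :: "'a poly poly" where "V = var_v"
  define W :: "'a poly poly" where "W = var_u"
  define D where "D = uv_rel f"
  define T where "T m = (\<Sum>k<m. H (d+k+1) * V^(k+1))" for m
  have Wd: "W ^ d = [:monom 1 d:]"
    by (simp add: W_def var_u_def const_pow xpow)
  have Wd': "(var_u :: 'a poly poly) ^ d = [:monom 1 d:]"
    using Wd by (simp add: W_def)
  have D: "D = W * V - F" by (simp add: D_def uv_rel_def W_def V_def F_def)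
  have R: "W * C j = F * C (Suc j) - H (Suc j) * W ^ d" if "d < Suc j" for j
  proof -
    have "- monom (coeff h (Suc j)) d = [:0,1:] * coeff q j - smult f (coeff q (Suc j))"
      using E[of "Suc j"] that by simp
    then have e: "[:[:0,1:] * coeff q j:] = [:smult f (coeff q (Suc j)):] - [:monom (coeff h (Suc j)) d:]"
      by (simp add: algebra_simps)
    have 1: "W * C j = [:[:0,1:] * coeff q j:]" by (simp add: W_def var_u_def C_def)
    have 2: "F * C (Suc j) = [:smult f (coeff q (Suc j)):]" by (simp add: F_def C_def)
    have 3: "H (Suc j) * W^d = [:monom (coeff h (Suc j)) d:]" by (simp add: H_def Wd smult_monom)
    show ?thesis using e 1 2 3 by simp
  qed
  have P: "D dvd F * C d - V^m * F * C (d+m) + W^d * T m" for m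
  proof (induction m)
    case 0
    then show ?case by (simp add: T_def)
  next
    case (Suc m)
    have Rm: "F * C (Suc (d+m)) = W * C (d+m) + H (Suc (d+m)) * W ^ d"
      using R[of "d+m"] by simp
    have X: "V^(Suc m) * F * C (d + Suc m) = V^(Suc m) * W * C (d+m) + V^(Suc m) * H (Suc (d+m)) * W^d"
    proof -
      have "V^(Suc m) * F * C (d + Suc m) = V^(Suc m) * (F * C (Suc (d+m)))" by (simp add: mult.assoc)
      also have "\<dots> = V^(Suc m) * (W * C (d+m) + H (Suc (d+m)) * W ^ d)" using Rm by simp
      finally show ?thesis by (simp add: algebra_simps)
    qed
    have eqn: "F * C d - V^(Suc m) * F * C (d + Suc m) + W^d * T (Suc m)
        = (F * C d - V^m * F * C (d+m) + W^d * T m) + (- (V^m * C (d+m))) * D"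
      unfolding X by (simp add: T_def D algebra_simps)
    show ?case unfolding eqn by (rule dvd_add[OF Suc.IH]) simp
  qed
  define N where "N = Suc (degree q)"
  have "C (d + N) = 0" by (simp add: C_def N_def coeff_eq_0)
  with P[of N] have P': "D dvd F * C d + W^d * T N" by simp
  have "monom 1 d dvd [:0,1:] * coeff (pCons 0 q) d"
  proof (cases d)
    case 0 then show ?thesis by simp
  next
    case (Suc i)
    then have "monom 1 d dvd coeff q i" using step1[OF E assms(1)] by simp
    moreover have "coeff (pCons 0 q) d = coeff q i" using Suc by simp
    ultimately show ?thesis by (metis dvd_mult)
  qed
  then obtain r where r: "[:0,1:] * coeff (pCons 0 q) d = monom 1 d * r" by (elim dvdE)
  have Ed: "g = monom (coeff h d) d + monom 1 d * r - smult f (coeff q d)"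
    using E[of d] r by (simp add: algebra_simps)
  have eq: "in_u g - (H d + [:r:] + T N) * W ^ d = - (F * C d + W^d * T N)"
    apply (subst Ed)
    by (simp add: in_u_def Wd H_def F_def C_def smult_monom algebra_simps)
  have "D dvd in_u g - (H d + [:r:] + T N) * W ^ d"
    by (subst eq, subst dvd_minus_iff, rule P')
  then have "eqS f (in_u g) ((H d + [:r:] + T N) * var_u ^ d)"
    by (simp add: eqS_def D_def W_def)
  then show ?thesis by blast
qed

end
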